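(* Let $d<n$ be positive integers and let $r\in\{0,1\}$ with $d\equiv r \pmod 2$. For every family $\mathcal{A}\subset 2^{[n]}$ with $\mathrm{VC}(\mathcal{A}\triangle\mathcal{A})\le d$, we have $|\mathcal{A}|\le 2^r\binom{n-r}{\le \lfloor d/2\rfloor}$.
   Context: $[n]=\{1,\dots,n\}$. For $Y\subset[n]$, $Y$ is shattered by $\mathcal{F}\subset 2^{[n]}$ if $\{S\cap Y: S\in\mathcal{F}\}=2^Y$; $\mathrm{VC}(\mathcal{F})$ is the largest cardinality of a set shattered by $\mathcal{F}$. $\mathcal{A}\triangle\mathcal{A}=\{S\triangle T: S,T\in\mathcal{A}\}$, where $\triangle$ is symmetric difference. $\binom{m}{\le t}=\sum_{j=0}^{t}\binom{m}{j}$. *)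

theory Defs
  imports Main
begin

definition shatters :: "nat set set \<Rightarrow> nat set \<Rightarrow> bool" where
  "shatters F Y \<longleftrightarrow> (\<lambda>S. S \<inter> Y) ` F = Pow Y"

definition VC :: "nat \<Rightarrow> nat set set \<Rightarrow> nat" where
  "VC n F = Max ({card Y | Y. Y \<subseteq> {1..n} \<and> shatters F Y} \<union> {0})"

definition symdiff_family :: "nat set set \<Rightarrow> nat set set" where
  "symdiff_family A = {(S - T) \<union> (T - S) | S T. S \<in> A \<and> T \<in> A}"

definition binom_le :: "nat \<Rightarrow> nat \<Rightarrow> nat" where
  "binom_le m t = (\<Sum>j\<le>t. m choose j)"

end

theory Submission
  imports Defs
begin


definition down :: "nat set set \<Rightarrow> bool" where
  "down F \<longleftrightarrow> (\<forall>X\<in>F. \<forall>Y. Y \<subseteq> X \<longrightarrow> Y \<in> F)"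

definition sdf :: "nat set set \<Rightarrow> nat set set \<Rightarrow> nat set set" where
  "sdf F G = {(S - T) \<union> (T - S) | S T. S \<in> F \<and> T \<in> G}"

definition lo :: "nat \<Rightarrow> nat set set \<Rightarrow> nat set set" where
  "lo k F = {S\<in>F. k \<notin> S}"
definition hi :: "nat \<Rightarrow> nat set set \<Rightarrow> nat set set" where
  "hi k F = (\<lambda>S. S - {k}) ` {S\<in>F. k \<in> S}"

fun dcomp :: "nat \<Rightarrow> nat set set \<Rightarrow> nat set set" where
  "dcomp 0 F = F"
| "dcomp (Suc k) F = dcomp k (lo (Suc k) F \<union> hi (Suc k) F) \<union> insert (Suc k) ` dcomp k (lo (Suc k) F \<inter> hi (Suc k) F)"

lemma lohi_sub: "F \<subseteq> Pow {1..Suc k} \<Longrightarrow> lo (Suc k) F \<subseteq> Pow {1..k} \<and> hi (Suc k) F \<subseteq> Pow {1..k}"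
  unfolding lo_def hi_def by (auto simp: subset_iff le_Suc_eq)

lemma comp_sub: "F \<subseteq> Pow {1..k} \<Longrightarrow> dcomp k F \<subseteq> Pow {1..k}"
proof (induction k arbitrary: F)
  case 0 then show ?case by simp
next
  case (Suc k)
  from lohi_sub[OF Suc.prems] have "lo (Suc k) F \<union> hi (Suc k) F \<subseteq> Pow {1..k}"
     "lo (Suc k) F \<inter> hi (Suc k) F \<subseteq> Pow {1..k}" by auto
  from Suc.IH[OF this(1)] Suc.IH[OF this(2)] show ?case by (force simp: subset_iff)
qed

lemma comp_mono: "F \<subseteq> G \<Longrightarrow> dcomp k F \<subseteq> dcomp k G"
proof (induction k arbitrary: F G)
  case 0 then show ?case by simp
next
  case (Suc k)
  have "lo (Suc k) F \<subseteq> lo (Suc k) G" "hi (Suc k) F \<subseteq> hi (Suc k) G"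
    using Suc.prems unfolding lo_def hi_def by auto
  then have "lo (Suc k) F \<union> hi (Suc k) F \<subseteq> lo (Suc k) G \<union> hi (Suc k) G"
     "lo (Suc k) F \<inter> hi (Suc k) F \<subseteq> lo (Suc k) G \<inter> hi (Suc k) G" by auto
  from Suc.IH[OF this(1)] Suc.IH[OF this(2)] show ?case by auto
qed

lemma comp_card: "F \<subseteq> Pow {1..k} \<Longrightarrow> card (dcomp k F) = card F"
proof (induction k arbitrary: F)
  case 0 then show ?case by simp
next
  case (Suc k)
  let ?L = "lo (Suc k) F" and ?H = "hi (Suc k) F"
  have fin: "finite F" using Suc.prems finite_subset by (metis finite_Pow_iff finite_atLeastAtMost)
  from lohi_sub[OF Suc.prems] have s: "?L \<union> ?H \<subseteq> Pow {1..k}" "?L \<inter> ?H \<subseteq> Pow {1..k}" by auto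
  have finL: "finite ?L" "finite ?H" using fin unfolding lo_def hi_def by auto
  have c1: "dcomp k (?L \<union> ?H) \<subseteq> Pow {1..k}" "dcomp k (?L \<inter> ?H) \<subseteq> Pow {1..k}"
    using comp_sub s by auto
  have f1: "finite (dcomp k (?L \<union> ?H))" "finite (dcomp k (?L \<inter> ?H))"
    using c1 finite_subset[OF _ finite_Pow_iff[THEN iffD2, OF finite_atLeastAtMost]] by auto
  have disj: "dcomp k (?L \<union> ?H) \<inter> insert (Suc k) ` dcomp k (?L \<inter> ?H) = {}"
    using c1 by auto
  have inj: "inj_on (insert (Suc k)) (dcomp k (?L \<inter> ?H))"
    using c1 unfolding inj_on_def by (metis Diff_insert_absorb PowD atLeastAtMost_iff in_mono not_less_eq_eq order_refl subsetD)
  have "card (dcomp (Suc k) F) = card (dcomp k (?L \<union> ?H)) + card (insert (Suc k) ` dcomp k (?L \<inter> ?H))"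
    using disj f1 by (simp add: card_Un_disjoint)
  also have "\<dots> = card (?L \<union> ?H) + card (?L \<inter> ?H)"
    using Suc.IH s card_image[OF inj] by simp
  also have "\<dots> = card ?L + card ?H" using card_Un_Int finL by metis
  also have "card ?H = card {S\<in>F. Suc k \<in> S}"
    unfolding hi_def by (rule card_image) (auto simp: inj_on_def)
  also have "card ?L + card {S\<in>F. Suc k \<in> S} = card F"
  proof -
    have "F = ?L \<union> {S\<in>F. Suc k \<in> S}" "?L \<inter> {S\<in>F. Suc k \<in> S} = {}" unfolding lo_def by auto
    then show ?thesis using fin by (metis card_Un_disjoint finite_Un)
  qed
  finally show ?case .
qed

lemma comp_down: "F \<subseteq> Pow {1..k} \<Longrightarrow> down (dcomp k F)"
proof (induction k arbitrary: F)
  case 0 then show ?case unfolding down_def by auto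
next
  case (Suc k)
  let ?L = "lo (Suc k) F" and ?H = "hi (Suc k) F"
  from lohi_sub[OF Suc.prems] have s: "?L \<union> ?H \<subseteq> Pow {1..k}" "?L \<inter> ?H \<subseteq> Pow {1..k}" by auto
  have d1: "down (dcomp k (?L \<union> ?H))" "down (dcomp k (?L \<inter> ?H))" using Suc.IH s by auto
  have m: "dcomp k (?L \<inter> ?H) \<subseteq> dcomp k (?L \<union> ?H)" by (rule comp_mono) auto
  have c1: "dcomp k (?L \<inter> ?H) \<subseteq> Pow {1..k}" using comp_sub s by auto
  show ?case unfolding down_def
  proof (intro ballI allI impI)
    fix X Y assume X: "X \<in> dcomp (Suc k) F" and Y: "Y \<subseteq> X"
    show "Y \<in> dcomp (Suc k) F"
    proof (cases "X \<in> dcomp k (?L \<union> ?H)")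
      case True then show ?thesis using d1 Y unfolding down_def by auto
    next
      case False
      then obtain U where U: "U \<in> dcomp k (?L \<inter> ?H)" "X = insert (Suc k) U" using X by auto
      show ?thesis
      proof (cases "Suc k \<in> Y")
        case True
        have "Y - {Suc k} \<subseteq> U" using Y U by auto
        then have "Y - {Suc k} \<in> dcomp k (?L \<inter> ?H)" using d1 U unfolding down_def by blast
        moreover have "Y = insert (Suc k) (Y - {Suc k})" using True by auto
        ultimately show ?thesis by (metis UnI2 dcomp.simps(2) image_eqI)
      next
        case False
        then have "Y \<subseteq> U" using Y U by auto
        then have "Y \<in> dcomp k (?L \<inter> ?H)" using d1 U unfolding down_def by blast
        then show ?thesis using m by auto
      qed
    qed
  qed
qed

lemma shat_transfer:
  assumes "shatters X Y" "\<And>x. x \<in> X \<Longrightarrow> \<exists>x'\<in>X'. x \<inter> Y = x' \<inter> Y"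
  shows "shatters X' Y"
  unfolding shatters_def
proof
  show "(\<lambda>S. S \<inter> Y) ` X' \<subseteq> Pow Y" by auto
  show "Pow Y \<subseteq> (\<lambda>S. S \<inter> Y) ` X'"
  proof
    fix W assume "W \<in> Pow Y"
    then obtain x where "x \<in> X" "W = x \<inter> Y" using assms(1) unfolding shatters_def by blast
    then show "W \<in> (\<lambda>S. S \<inter> Y) ` X'" using assms(2) by blast
  qed
qed

lemma sdf_sym: "sdf F G = sdf G F"
proof -
  have "\<And>S T. (S - T) \<union> (T - S) = (T - S) \<union> (S - (T::nat set))" by blast
  then show ?thesis unfolding sdf_def by blast
qed

lemma shatters_sym: "shatters (sdf F G) Y = shatters (sdf G F) Y"
  by (simp add: sdf_sym)

lemma lohi_pre: "S' \<in> lo (Suc k) F \<union> hi (Suc k) F \<Longrightarrow> \<exists>S\<in>F. S' = S - {Suc k}"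
  unfolding lo_def hi_def by auto

lemma notin_pow: "A \<subseteq> Pow {1..k} \<Longrightarrow> X \<in> A \<Longrightarrow> Suc k \<notin> X"
  by (meson PowD atLeastAtMost_iff not_less_eq_eq order_refl subsetD)

lemma sd_remove: "x \<notin> Y \<Longrightarrow> S - {x} = S' \<Longrightarrow> T - {x} = T' \<Longrightarrow>
   ((S - T) \<union> (T - S)) \<inter> Y = ((S' - T') \<union> (T' - S')) \<inter> Y"
  by blast

lemma step1:
  assumes "shatters (sdf (lo (Suc k) F \<union> hi (Suc k) F) (lo (Suc k) G \<union> hi (Suc k) G)) Y"
    and "Suc k \<notin> Y"
  shows "shatters (sdf F G) Y"
proof (rule shat_transfer[OF assms(1)])
  fix x assume "x \<in> sdf (lo (Suc k) F \<union> hi (Suc k) F) (lo (Suc k) G \<union> hi (Suc k) G)"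
  then obtain S' T' where x: "x = (S' - T') \<union> (T' - S')" and
    S': "S' \<in> lo (Suc k) F \<union> hi (Suc k) F" and T': "T' \<in> lo (Suc k) G \<union> hi (Suc k) G"
    unfolding sdf_def by blast
  obtain S T where "S \<in> F" "S' = S - {Suc k}" "T \<in> G" "T' = T - {Suc k}"
    using lohi_pre[OF S'] lohi_pre[OF T'] by blast
  then show "\<exists>x'\<in>sdf F G. x \<inter> Y = x' \<inter> Y"
  proof -
    have "x \<inter> Y = ((S - T) \<union> (T - S)) \<inter> Y" using x assms(2) \<open>S' = _\<close> \<open>T' = _\<close> by auto
    moreover have "(S - T) \<union> (T - S) \<in> sdf F G" using \<open>S \<in> F\<close> \<open>T \<in> G\<close> unfolding sdf_def by blast
    ultimately show ?thesis by blast
  qed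
qed


lemma step2:
  assumes "shatters (sdf (lo (Suc k) F \<inter> hi (Suc k) F) (lo (Suc k) G \<union> hi (Suc k) G)) Y"
    and "Suc k \<notin> Y"
  shows "shatters (sdf F G) (insert (Suc k) Y)"
  unfolding shatters_def
proof
  show "(\<lambda>S. S \<inter> insert (Suc k) Y) ` sdf F G \<subseteq> Pow (insert (Suc k) Y)" by auto
  show "Pow (insert (Suc k) Y) \<subseteq> (\<lambda>S. S \<inter> insert (Suc k) Y) ` sdf F G"
  proof
    fix W assume W: "W \<in> Pow (insert (Suc k) Y)"
    then have "W - {Suc k} \<in> Pow Y" by auto
    then obtain z where z: "z \<in> sdf (lo (Suc k) F \<inter> hi (Suc k) F) (lo (Suc k) G \<union> hi (Suc k) G)"
      "W - {Suc k} = z \<inter> Y"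
      using assms(1) unfolding shatters_def by blast
    then obtain S' T' where zz: "z = (S' - T') \<union> (T' - S')" and
      S': "S' \<in> lo (Suc k) F \<inter> hi (Suc k) F" and T': "T' \<in> lo (Suc k) G \<union> hi (Suc k) G"
      unfolding sdf_def by blast
    obtain T where T: "T \<in> G" "T' = T - {Suc k}" using lohi_pre[OF T'] by blast
    have S1: "S' \<in> F" "Suc k \<notin> S'" using S' unfolding lo_def by auto
    have S2: "insert (Suc k) S' \<in> F"
    proof -
      obtain S0 where "S0 \<in> F" "Suc k \<in> S0" "S' = S0 - {Suc k}" using S' unfolding hi_def by auto
      then show ?thesis by (metis insert_Diff)
    qed
    define S where "S = (if (Suc k \<in> W) = (Suc k \<in> T) then S' else insert (Suc k) S')"
    have SF: "S \<in> F" using S1 S2 S_def by auto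
    have "W = ((S - T) \<union> (T - S)) \<inter> insert (Suc k) Y"
    proof -
      have "S - {Suc k} = S'" using S_def S1(2) by auto
      then have "((S - T) \<union> (T - S)) \<inter> Y = z \<inter> Y"
        using sd_remove[OF assms(2) _ T(2)[symmetric]] zz by simp
      moreover have "W \<inter> Y = W - {Suc k}" using W assms(2) by auto
      ultimately have a: "W \<inter> Y = ((S - T) \<union> (T - S)) \<inter> Y" using z(2) by simp
      have b: "(Suc k \<in> W) = (Suc k \<in> ((S - T) \<union> (T - S)))"
      proof (cases "(Suc k \<in> W) = (Suc k \<in> T)")
        case True then show ?thesis using S_def S1(2) by simp
      next
        case False then show ?thesis using S_def S1(2) by auto
      qed
      show ?thesis using a b W by auto
    qed
    moreover have "(S - T) \<union> (T - S) \<in> sdf F G" using SF T(1) unfolding sdf_def by blast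
    ultimately show "W \<in> (\<lambda>S. S \<inter> insert (Suc k) Y) ` sdf F G" by blast
  qed
qed

lemma comp_shatter:
  "F \<subseteq> Pow {1..k} \<Longrightarrow> G \<subseteq> Pow {1..k} \<Longrightarrow> U \<in> dcomp k F \<Longrightarrow> V \<in> dcomp k G \<Longrightarrow> U \<inter> V = {}
   \<Longrightarrow> shatters (sdf F G) (U \<union> V)"
proof (induction k arbitrary: F G U V)
  case 0
  then have "U = {}" "V = {}" by auto
  moreover have "(U - V) \<union> (V - U) \<in> sdf F G" using 0 unfolding sdf_def by auto
  ultimately show ?case unfolding shatters_def by auto
next
  case (Suc k)
  have sF: "lo (Suc k) F \<union> hi (Suc k) F \<subseteq> Pow {1..k}" "lo (Suc k) F \<inter> hi (Suc k) F \<subseteq> Pow {1..k}"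
    using lohi_sub[OF Suc.prems(1)] by auto
  have sG: "lo (Suc k) G \<union> hi (Suc k) G \<subseteq> Pow {1..k}" "lo (Suc k) G \<inter> hi (Suc k) G \<subseteq> Pow {1..k}"
    using lohi_sub[OF Suc.prems(2)] by auto
  have cF: "dcomp k (lo (Suc k) F \<union> hi (Suc k) F) \<subseteq> Pow {1..k}" "dcomp k (lo (Suc k) F \<inter> hi (Suc k) F) \<subseteq> Pow {1..k}"
    using comp_sub sF by auto
  have cG: "dcomp k (lo (Suc k) G \<union> hi (Suc k) G) \<subseteq> Pow {1..k}" "dcomp k (lo (Suc k) G \<inter> hi (Suc k) G) \<subseteq> Pow {1..k}"
    using comp_sub sG by auto
  consider (a) "U \<in> dcomp k (lo (Suc k) F \<union> hi (Suc k) F)" | (b) U' where "U' \<in> dcomp k (lo (Suc k) F \<inter> hi (Suc k) F)" "U = insert (Suc k) U'"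
    using Suc.prems(3) by auto
  then show ?case
  proof cases
    case a
    consider (c) "V \<in> dcomp k (lo (Suc k) G \<union> hi (Suc k) G)" | (d) V' where "V' \<in> dcomp k (lo (Suc k) G \<inter> hi (Suc k) G)" "V = insert (Suc k) V'"
      using Suc.prems(4) by auto
    then show ?thesis
    proof cases
      case c
      have "shatters (sdf (lo (Suc k) F \<union> hi (Suc k) F) (lo (Suc k) G \<union> hi (Suc k) G)) (U \<union> V)"
        using Suc.IH[OF sF(1) sG(1) a c Suc.prems(5)] .
      moreover have "Suc k \<notin> U \<union> V" using a c notin_pow[OF cF(1)] notin_pow[OF cG(1)] by blast
      ultimately show ?thesis by (rule step1)
    next
      case d
      have "shatters (sdf (lo (Suc k) F \<union> hi (Suc k) F) (lo (Suc k) G \<inter> hi (Suc k) G)) (U \<union> V')"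
        using Suc.IH[OF sF(1) sG(2) a d(1)] Suc.prems(5) d(2) by auto
      then have "shatters (sdf (lo (Suc k) G \<inter> hi (Suc k) G) (lo (Suc k) F \<union> hi (Suc k) F)) (V' \<union> U)"
        by (simp add: sdf_sym Un_commute)
      moreover have "Suc k \<notin> V' \<union> U" using a d notin_pow[OF cF(1)] notin_pow[OF cG(2)] by blast
      ultimately have "shatters (sdf G F) (insert (Suc k) (V' \<union> U))" by (rule step2)
      then show ?thesis using d(2) by (simp add: sdf_sym Un_commute)
    qed
  next
    case b
    have V: "V \<in> dcomp k (lo (Suc k) G \<union> hi (Suc k) G)"
    proof -
      have "Suc k \<notin> V" using Suc.prems(5) b(2) by auto
      moreover have "V \<in> dcomp k (lo (Suc k) G \<union> hi (Suc k) G) \<or> (\<exists>V'. V = insert (Suc k) V')"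
        using Suc.prems(4) by auto
      ultimately show ?thesis by auto
    qed
    have "shatters (sdf (lo (Suc k) F \<inter> hi (Suc k) F) (lo (Suc k) G \<union> hi (Suc k) G)) (U' \<union> V)"
      using Suc.IH[OF sF(2) sG(1) b(1) V] Suc.prems(5) b(2) by auto
    moreover have "Suc k \<notin> U' \<union> V" using b V notin_pow[OF cF(2)] notin_pow[OF cG(1)] by blast
    ultimately have "shatters (sdf F G) (insert (Suc k) (U' \<union> V))" by (rule step2)
    then show ?thesis using b(2) by simp
  qed
qed



definition sw :: "nat \<Rightarrow> nat \<Rightarrow> nat set \<Rightarrow> nat set" where
  "sw i j S = insert i (S - {j})"
definition phi :: "nat \<Rightarrow> nat \<Rightarrow> nat set set \<Rightarrow> nat set \<Rightarrow> nat set" where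
  "phi i j E S = (if j \<in> S \<and> i \<notin> S \<and> sw i j S \<notin> E then sw i j S else S)"
definition shifted :: "nat set set \<Rightarrow> bool" where
  "shifted E \<longleftrightarrow> (\<forall>S\<in>E. \<forall>i j. 1 \<le> i \<and> i < j \<and> j \<in> S \<and> i \<notin> S \<longrightarrow> sw i j S \<in> E)"
definition unionb :: "nat \<Rightarrow> nat set set \<Rightarrow> bool" where
  "unionb d E \<longleftrightarrow> (\<forall>S\<in>E. \<forall>T\<in>E. card (S \<union> T) \<le> d)"
definition wt :: "nat set set \<Rightarrow> nat" where
  "wt E = (\<Sum>S\<in>E. \<Sum>S)"

lemma sw_back: "j \<in> S \<Longrightarrow> i \<notin> S \<Longrightarrow> i \<noteq> j \<Longrightarrow> S = insert j (sw i j S - {i})"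
  unfolding sw_def by auto

lemma sw_inj: "j \<in> S \<Longrightarrow> i \<notin> S \<Longrightarrow> j \<in> T \<Longrightarrow> i \<notin> T \<Longrightarrow> i \<noteq> j \<Longrightarrow> sw i j S = sw i j T \<Longrightarrow> S = T"
  by (metis sw_back)

lemma phi_inj: "i \<noteq> j \<Longrightarrow> inj_on (phi i j E) E"
  unfolding inj_on_def
proof (intro ballI impI)
  fix S T assume ij: "i \<noteq> j" and S: "S \<in> E" and T: "T \<in> E" and eq: "phi i j E S = phi i j E T"
  show "S = T"
  proof (cases "j \<in> S \<and> i \<notin> S \<and> sw i j S \<notin> E")
    case True
    note ts = True
    show ?thesis
    proof (cases "j \<in> T \<and> i \<notin> T \<and> sw i j T \<notin> E")
      case True then show ?thesis using ts eq ij sw_inj[of j S i T] unfolding phi_def by auto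
    next
      case False then show ?thesis using ts eq T unfolding phi_def by auto
    qed
  next
    case False
    note fs = False
    show ?thesis
    proof (cases "j \<in> T \<and> i \<notin> T \<and> sw i j T \<notin> E")
      case True then show ?thesis using fs eq S unfolding phi_def by auto
    next
      case False then show ?thesis using fs eq unfolding phi_def by auto
    qed
  qed
qed

lemma phi_sub: "E \<subseteq> Pow {1..n} \<Longrightarrow> 1 \<le> i \<Longrightarrow> i < j \<Longrightarrow> phi i j E ` E \<subseteq> Pow {1..n}"
    unfolding phi_def sw_def by (auto simp: subset_iff) (meson less_imp_le_nat order.trans)

lemma phi_down:
  assumes d: "down E"
  shows "down (phi i j E ` E)"
  unfolding down_def
proof (intro ballI allI impI)
  fix X Y assume X: "X \<in> phi i j E ` E" and Y: "Y \<subseteq> X"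
  then obtain S where S: "S \<in> E" "X = phi i j E S" by auto
  show "Y \<in> phi i j E ` E"
  proof (cases "j \<in> S \<and> i \<notin> S \<and> sw i j S \<notin> E")
    case False
    note fnm = False
    then have XS: "X = S" using S unfolding phi_def by auto
    have YE: "Y \<in> E" using d S Y XS unfolding down_def by auto
    have "phi i j E Y = Y"
    proof (cases "j \<in> Y \<and> i \<notin> Y")
      case True
      then have jS: "j \<in> S" using Y XS by auto
      show ?thesis
      proof (cases "i \<in> S")
        case True
        have "sw i j Y \<subseteq> S" using True Y XS unfolding sw_def by auto
        then have "sw i j Y \<in> E" using d S unfolding down_def by auto
        then show ?thesis unfolding phi_def by auto
      next
        case False
        then have "sw i j S \<in> E" using fnm jS by auto
        moreover have "sw i j Y \<subseteq> sw i j S" using Y XS unfolding sw_def by auto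
        ultimately have "sw i j Y \<in> E" using d unfolding down_def by auto
        then show ?thesis unfolding phi_def by auto
      qed
    next
      case False then show ?thesis unfolding phi_def by auto
    qed
    then show ?thesis using YE by (metis image_eqI)
  next
    case True
    then have XS: "X = sw i j S" "sw i j S \<notin> E" using S unfolding phi_def by auto
    show ?thesis
    proof (cases "i \<in> Y")
      case False
      then have "Y \<subseteq> S" "j \<notin> Y" using Y XS True unfolding sw_def by auto
      then have "Y \<in> E" "phi i j E Y = Y" using d S unfolding down_def phi_def by auto
      then show ?thesis by (metis image_eqI)
    next
      case iY: True
      define Y' where "Y' = insert j (Y - {i})"
      have "Y' \<subseteq> S" using Y XS True unfolding Y'_def sw_def by auto
      then have Y'E: "Y' \<in> E" using d S unfolding down_def by auto
      have ijne: "i \<noteq> j" using True by auto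
      have swY': "sw i j Y' = Y" using iY ijne Y XS True unfolding Y'_def sw_def by auto
      show ?thesis
      proof (cases "Y \<in> E")
        case True
        then have "phi i j E Y = Y" using iY unfolding phi_def by auto
        then show ?thesis using True by (metis image_eqI)
      next
        case False
        have "j \<in> Y'" "i \<notin> Y'" using ijne unfolding Y'_def by auto
        then have "phi i j E Y' = Y" using False swY' unfolding phi_def by auto
        then show ?thesis using Y'E by (metis image_eqI)
      qed
    qed
  qed
qed

lemma one_moved:
  assumes fin: "finite S" "finite T" and S: "j \<in> S" "i \<notin> S" and T: "T \<in> E" "S \<in> E"
    and Tn: "\<not> (j \<in> T \<and> i \<notin> T \<and> sw i j T \<notin> E)"
  shows "\<exists>S0\<in>E. \<exists>T0\<in>E. card (sw i j S \<union> T) \<le> card (S0 \<union> T0)"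
proof (cases "i \<in> T")
  case True
  then have "sw i j S \<union> T \<subseteq> S \<union> T" unfolding sw_def by auto
  then have "card (sw i j S \<union> T) \<le> card (S \<union> T)" using fin by (simp add: card_mono)
  then show ?thesis using T by blast
next
  case False
  show ?thesis
  proof (cases "j \<in> T")
    case True
    then have "sw i j T \<in> E" using Tn False by auto
    moreover have "sw i j S \<union> T = S \<union> sw i j T" using True S unfolding sw_def by auto
    ultimately show ?thesis using T(2) by (metis order_refl)
  next
    case jT: False
    have "sw i j S \<union> T = insert i ((S \<union> T) - {j})" unfolding sw_def using jT by auto
    moreover have "i \<notin> (S \<union> T) - {j}" using False S by auto
    ultimately have "card (sw i j S \<union> T) = Suc (card ((S \<union> T) - {j}))" using fin by simp
    also have "\<dots> = card (S \<union> T)" using fin S by (intro card_Suc_Diff1) auto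
    finally have "card (sw i j S \<union> T) \<le> card (S \<union> T)" by simp
    then show ?thesis using T by blast
  qed
qed

lemma phi_unionb:
  assumes fin: "\<And>S. S \<in> E \<Longrightarrow> finite S" and u: "unionb d E"
  shows "unionb d (phi i j E ` E)"
  unfolding unionb_def
proof (intro ballI)
  fix X Y assume "X \<in> phi i j E ` E" "Y \<in> phi i j E ` E"
  then obtain S T where S: "S \<in> E" "X = phi i j E S" and T: "T \<in> E" "Y = phi i j E T" by auto
  have "\<exists>S0\<in>E. \<exists>T0\<in>E. card (X \<union> Y) \<le> card (S0 \<union> T0)"
  proof (cases "j \<in> S \<and> i \<notin> S \<and> sw i j S \<notin> E")
    case sm: True
    show ?thesis
    proof (cases "j \<in> T \<and> i \<notin> T \<and> sw i j T \<notin> E")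
      case True
      have "X \<union> Y = insert i ((S \<union> T) - {j})" using sm True S T unfolding phi_def sw_def by auto
      moreover have "i \<notin> (S \<union> T) - {j}" using sm True by auto
      ultimately have "card (X \<union> Y) = Suc (card ((S \<union> T) - {j}))" using fin S T by simp
      also have "\<dots> = card (S \<union> T)" using fin S T sm by (intro card_Suc_Diff1) auto
      finally have "card (X \<union> Y) \<le> card (S \<union> T)" by simp
      then show ?thesis using S T by blast
    next
      case False
      then have "X \<union> Y = sw i j S \<union> T" using sm S T unfolding phi_def by auto
      then show ?thesis using one_moved[of S T j i E] fin S T sm False by auto
    qed
  next
    case sn: False
    show ?thesis
    proof (cases "j \<in> T \<and> i \<notin> T \<and> sw i j T \<notin> E")
      case True
      then have "X \<union> Y = sw i j T \<union> S" using sn S T unfolding phi_def by auto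
      then show ?thesis using one_moved[of T S j i E] fin S T sn True by auto
    next
      case False
      then have "X \<union> Y = S \<union> T" using sn S T unfolding phi_def by auto
      then show ?thesis using S(1) T(1) by (metis order_refl)
    qed
  qed
  then show "card (X \<union> Y) \<le> d" using u unfolding unionb_def by (meson order_trans)
qed

lemma sum_sw: "finite S \<Longrightarrow> j \<in> S \<Longrightarrow> i \<notin> S \<Longrightarrow> i < j \<Longrightarrow> \<Sum>(sw i j S) < \<Sum>S"
proof -
  assume a: "finite S" "j \<in> S" "i \<notin> S" "i < j"
  have "\<Sum>(sw i j S) = i + \<Sum>(S - {j})" unfolding sw_def using a by (simp add: sum.insert)
  moreover have "\<Sum>S = j + \<Sum>(S - {j})" using a by (metis sum.remove)
  ultimately show ?thesis using a by simp
qed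

lemma phi_wt:
  assumes fin: "finite E" "\<And>S. S \<in> E \<Longrightarrow> finite S" and ij: "i < j"
    and mv: "S \<in> E" "j \<in> S" "i \<notin> S" "sw i j S \<notin> E"
  shows "wt (phi i j E ` E) < wt E"
proof -
  have "wt (phi i j E ` E) = (\<Sum>T\<in>E. \<Sum>(phi i j E T))"
    unfolding wt_def using phi_inj[of i j E] ij by (simp add: sum.reindex)
  also have "\<dots> < (\<Sum>T\<in>E. \<Sum>T)"
  proof (rule sum_strict_mono_ex1[OF fin(1)])
    show "\<forall>T\<in>E. \<Sum>(phi i j E T) \<le> \<Sum>T"
      using sum_sw fin(2) ij unfolding phi_def by (auto simp: less_imp_le)
    show "\<exists>T\<in>E. \<Sum>(phi i j E T) < \<Sum>T"
      using mv sum_sw fin(2) ij unfolding phi_def by auto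
  qed
  finally show ?thesis unfolding wt_def .
qed



definition bound :: "nat \<Rightarrow> nat \<Rightarrow> nat" where
  "bound n d = 2 ^ (d mod 2) * binom_le (n - d mod 2) (d div 2)"

lemma binom_pascal: "binom_le (Suc m) (Suc t) = binom_le m (Suc t) + binom_le m t"
proof -
  have "binom_le (Suc m) (Suc t) = (Suc m choose 0) + (\<Sum>j\<le>t. Suc m choose Suc j)"
    unfolding binom_le_def by (rule sum.atMost_Suc_shift)
  also have "(\<Sum>j\<le>t. Suc m choose Suc j) = (\<Sum>j\<le>t. m choose Suc j) + (\<Sum>j\<le>t. m choose j)"
    by (simp only: binomial_Suc_Suc sum.distrib add.commute)
  also have "binom_le m (Suc t) = (m choose 0) + (\<Sum>j\<le>t. m choose Suc j)"
    unfolding binom_le_def by (rule sum.atMost_Suc_shift)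
  ultimately show ?thesis unfolding binom_le_def by simp
qed

lemma binom_half: "binom_le (2*s+1) s = 2 ^ (2*s)"
proof -
  define N where "N = 2*s+1"
  define f where "f = (\<lambda>j. N choose j)"
  have "sum f {..N} = 2 ^ N" unfolding f_def by (rule choose_row_sum)
  moreover have "sum f {..N} = sum f ({..s} \<union> {s+1..N})"
    by (rule arg_cong[where f="sum f"]) (auto simp: N_def)
  moreover have "sum f ({..s} \<union> {s+1..N}) = sum f {..s} + sum f {s+1..N}"
    by (rule sum.union_disjoint) auto
  moreover have "sum f {s+1..N} = sum f {..s}"
  proof -
    have "sum f {s+1..N} = (\<Sum>j\<in>{..s}. f (N - j))"
      by (rule sum.reindex_bij_witness[of _ "\<lambda>j. N - j" "\<lambda>j. N - j"]) (auto simp: N_def)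
    also have "\<dots> = sum f {..s}"
      by (rule sum.cong) (auto simp: f_def N_def binomial_symmetric[symmetric])
    finally show ?thesis .
  qed
  ultimately have "2 ^ N = 2 * sum f {..s}" by simp
  moreover have "(2::nat) ^ N = 2 * 2 ^ (2*s)" unfolding N_def by simp
  ultimately show ?thesis unfolding binom_le_def f_def N_def by simp
qed

lemma bound_top: "bound (Suc m) m = 2 ^ m"
proof (cases "even m")
  case True
  then obtain s where "m = 2*s" by auto
  then show ?thesis unfolding bound_def using binom_half[of s] by simp
next
  case False
  then obtain s where "m = 2*s+1" using oddE by blast
  then show ?thesis unfolding bound_def using binom_half[of s] by simp
qed

lemma bound_rec: "2 \<le> d \<Longrightarrow> d < m \<Longrightarrow> bound m d + bound m (d - 2) = bound (Suc m) d"
proof (cases "even d")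
  case True
  assume a: "2 \<le> d" "d < m"
  obtain k where k: "d = 2*k" using True by blast
  define s where "s = k - 1"
  have s: "d = 2*s+2" using k a unfolding s_def by simp
  show ?thesis unfolding bound_def using s binom_pascal[of m s] by simp
next
  case False
  assume a: "2 \<le> d" "d < m"
  obtain k where k: "d = 2*k+1" using False oddE by blast
  define s where "s = k - 1"
  have s: "d = 2*s+3" using k a unfolding s_def by simp
  obtain m' where m': "m = Suc m'" using a by (cases m) auto
  show ?thesis unfolding bound_def using s m' binom_pascal[of m' s] by simp
qed

lemma bound_small: "d < 2 \<Longrightarrow> d < m \<Longrightarrow> bound m d = bound (Suc m) d"
  unfolding bound_def binom_le_def by (cases d) auto



lemma card_split:
  assumes "finite D"
  shows "card D = card (lo k D) + card (hi k D)"
proof -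
  have "card (hi k D) = card {S\<in>D. k \<in> S}"
    unfolding hi_def by (rule card_image) (auto simp: inj_on_def)
  moreover have "D = lo k D \<union> {S\<in>D. k \<in> S}" "lo k D \<inter> {S\<in>D. k \<in> S} = {}" unfolding lo_def by auto
  ultimately show ?thesis using assms by (metis card_Un_disjoint finite_Un)
qed

lemma top_case:
  assumes sub: "D \<subseteq> Pow {1..Suc m}" and u: "unionb m D"
  shows "card D \<le> 2 ^ m"
proof -
  define c where "c = (\<lambda>S. {1..Suc m} - S)"
  have fin: "finite D" using sub finite_subset by (metis finite_Pow_iff finite_atLeastAtMost)
  have inj: "inj_on c D" unfolding inj_on_def c_def using sub by blast
  have dis: "D \<inter> c ` D = {}"
  proof (rule ccontr)
    assume "D \<inter> c ` D \<noteq> {}"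
    then obtain S where S: "S \<in> D" "c S \<in> D" by auto
    have "S \<union> c S = {1..Suc m}" using S sub unfolding c_def by auto
    then have "card (S \<union> c S) = Suc m" by simp
    moreover have "card (S \<union> c S) \<le> m" using u S unfolding unionb_def by auto
    ultimately show False by simp
  qed
  have "D \<union> c ` D \<subseteq> Pow {1..Suc m}" using sub unfolding c_def by auto
  then have "card (D \<union> c ` D) \<le> card (Pow {1..Suc m})" by (intro card_mono) auto
  also have "\<dots> = 2 ^ Suc m" by (simp add: card_Pow)
  finally have "card D + card (c ` D) \<le> 2 ^ Suc m" using dis fin by (simp add: card_Un_disjoint)
  then show ?thesis using card_image[OF inj] by simp
qed

lemma kleitman:
  "d < n \<Longrightarrow> D \<subseteq> Pow {1..n} \<Longrightarrow> down D \<Longrightarrow> shifted D \<Longrightarrow> unionb d D \<Longrightarrow> card D \<le> bound n d"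
proof (induction n arbitrary: d D)
  case 0 then show ?case by simp
next
  case (Suc m)
  have fin: "finite D" using Suc.prems(2) by (rule finite_subset) simp
  show ?case
  proof (cases "d = m")
    case True
    have "card D \<le> 2 ^ m" using top_case[of D m] Suc.prems(2,5) True by simp
    then show ?thesis using True bound_top by simp
  next
    case False
    then have dm: "d < m" using Suc.prems(1) by simp
    let ?L = "lo (Suc m) D" and ?H = "hi (Suc m) D"
    have sL: "?L \<subseteq> Pow {1..m}" and sH: "?H \<subseteq> Pow {1..m}" using lohi_sub[OF Suc.prems(2)] by auto
    have dL: "down ?L" unfolding down_def
    proof (intro ballI allI impI)
      fix X Y assume "X \<in> ?L" "Y \<subseteq> X"
      then have "X \<in> D" "Suc m \<notin> X" "Y \<subseteq> X" unfolding lo_def by auto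
      then have "Y \<in> D" "Suc m \<notin> Y" using Suc.prems(3) unfolding down_def by auto
      then show "Y \<in> ?L" unfolding lo_def by simp
    qed
    have shD: "\<forall>S\<in>D. \<forall>i j. 1 \<le> i \<and> i < j \<and> j \<in> S \<and> i \<notin> S \<longrightarrow> sw i j S \<in> D"
      using Suc.prems(4) unfolding shifted_def .
    have shL: "shifted ?L" unfolding shifted_def
    proof (intro ballI allI impI)
      fix S i j assume S: "S \<in> ?L" and ij: "1 \<le> i \<and> i < j \<and> j \<in> S \<and> i \<notin> S"
      have sD: "S \<in> D" "Suc m \<notin> S" using S unfolding lo_def by auto
      have "S \<subseteq> {1..Suc m}" using Suc.prems(2) sD(1) by blast
      then have jle: "j \<le> Suc m" using ij by auto
      have "sw i j S \<in> D" using shD sD(1) ij by blast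
      moreover have "Suc m \<notin> sw i j S" using sD(2) ij jle unfolding sw_def by auto
      ultimately show "sw i j S \<in> ?L" unfolding lo_def by simp
    qed
    have "?L \<subseteq> D" unfolding lo_def by auto
    then have uL: "unionb d ?L" using Suc.prems(5) unfolding unionb_def by (meson subsetD)
    have cL: "card ?L \<le> bound m d" using Suc.IH[OF dm sL dL shL uL] .
    have Hmem: "\<And>X. X \<in> ?H \<Longrightarrow> insert (Suc m) X \<in> D \<and> X \<subseteq> {1..m}"
    proof -
      fix X assume X: "X \<in> ?H"
      then obtain S where "S \<in> D" "Suc m \<in> S" "X = S - {Suc m}" unfolding hi_def by auto
      moreover have "X \<subseteq> {1..m}" using X sH by auto
      ultimately show "insert (Suc m) X \<in> D \<and> X \<subseteq> {1..m}" by (metis insert_Diff)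
    qed
    have Hin: "\<And>X. insert (Suc m) X \<in> D \<Longrightarrow> Suc m \<notin> X \<Longrightarrow> X \<in> ?H"
    proof -
      fix X assume "insert (Suc m) X \<in> D" "Suc m \<notin> X"
      then have "insert (Suc m) X \<in> {S\<in>D. Suc m \<in> S}" "X = insert (Suc m) X - {Suc m}" by auto
      then show "X \<in> ?H" unfolding hi_def by (rule rev_image_eqI)
    qed
    have dH: "down ?H" unfolding down_def
    proof (intro ballI allI impI)
      fix X Y assume X: "X \<in> ?H" and Y: "Y \<subseteq> X"
      have "insert (Suc m) Y \<subseteq> insert (Suc m) X" using Y by auto
      then have "insert (Suc m) Y \<in> D" using Hmem[OF X] Suc.prems(3) unfolding down_def by blast
      moreover have "Suc m \<notin> Y" using Hmem[OF X] Y by auto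
      ultimately show "Y \<in> ?H" using Hin by blast
    qed
    have shH: "shifted ?H" unfolding shifted_def
    proof (intro ballI allI impI)
      fix X i j assume X: "X \<in> ?H" and ij: "1 \<le> i \<and> i < j \<and> j \<in> X \<and> i \<notin> X"
      have jm: "j \<le> m" using Hmem[OF X] ij by auto
      have "1 \<le> i \<and> i < j \<and> j \<in> insert (Suc m) X \<and> i \<notin> insert (Suc m) X"
        using ij jm by auto
      then have "sw i j (insert (Suc m) X) \<in> D"
        using shD Hmem[OF X] by blast
      moreover have "sw i j (insert (Suc m) X) = insert (Suc m) (sw i j X)"
        using ij jm unfolding sw_def by auto
      moreover have "Suc m \<notin> sw i j X" using ij jm Hmem[OF X] unfolding sw_def by auto
      ultimately show "sw i j X \<in> ?H" using Hin by auto
    qed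
    have key: "card (X \<union> Y) + 2 \<le> d" if X: "X \<in> ?H" and Y: "Y \<in> ?H" for X Y
    proof (rule ccontr)
      assume nc: "\<not> card (X \<union> Y) + 2 \<le> d"
      have XY: "X \<union> Y \<subseteq> {1..m}" using Hmem[OF X] Hmem[OF Y] by auto
      have fXY: "finite (X \<union> Y)" using XY by (rule finite_subset) simp
      have "insert (Suc m) X \<union> insert (Suc m) Y = insert (Suc m) (X \<union> Y)" by auto
      moreover have "Suc m \<notin> X \<union> Y" using XY by auto
      ultimately have "card (insert (Suc m) X \<union> insert (Suc m) Y) = Suc (card (X \<union> Y))"
        using fXY by simp
      moreover have "card (insert (Suc m) X \<union> insert (Suc m) Y) \<le> d"
        using Suc.prems(5) Hmem[OF X] Hmem[OF Y] unfolding unionb_def by blast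
      ultimately have eq: "Suc (card (X \<union> Y)) = d" using nc by simp
      then have "card (X \<union> Y) < card {1..m}" using dm by simp
      moreover have "\<not> {1..m} \<subseteq> X \<union> Y"
      proof
        assume "{1..m} \<subseteq> X \<union> Y"
        then have "card {1..m} \<le> card (X \<union> Y)" by (rule card_mono[OF fXY])
        with \<open>card (X \<union> Y) < card {1..m}\<close> show False by simp
      qed
      then obtain i where i: "i \<in> {1..m}" "i \<notin> X \<union> Y" by blast
      have "1 \<le> i \<and> i < Suc m \<and> Suc m \<in> insert (Suc m) Y \<and> i \<notin> insert (Suc m) Y"
        using i by auto
      then have "sw i (Suc m) (insert (Suc m) Y) \<in> D"
        using shD Hmem[OF Y] by blast
      moreover have "sw i (Suc m) (insert (Suc m) Y) = insert i Y"
        using Hmem[OF Y] i unfolding sw_def by auto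
      ultimately have iY: "insert i Y \<in> D" by simp
      have "insert (Suc m) X \<union> insert i Y = insert (Suc m) (insert i (X \<union> Y))" by auto
      moreover have "card (insert (Suc m) (insert i (X \<union> Y))) = Suc (Suc (card (X \<union> Y)))"
      proof -
        have "Suc m \<notin> insert i (X \<union> Y)" using i \<open>Suc m \<notin> X \<union> Y\<close> by auto
        then show ?thesis using fXY i(2) by simp
      qed
      moreover have "card (insert (Suc m) X \<union> insert i Y) \<le> d"
        using Suc.prems(5) Hmem[OF X] iY unfolding unionb_def by blast
      ultimately show False using eq by simp
    qed
    show ?thesis
    proof (cases "2 \<le> d")
      case True
      have uH: "unionb (d - 2) ?H" unfolding unionb_def using key by fastforce
      have cH: "card ?H \<le> bound m (d - 2)" using Suc.IH[OF _ sH dH shH uH] dm by simp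
      show ?thesis using card_split[OF fin, of "Suc m"] cL cH bound_rec[OF True dm] by simp
    next
      case False
      have "?H = {}"
      proof (rule ccontr)
        assume "?H \<noteq> {}"
        then obtain X where "X \<in> ?H" by auto
        from key[OF this this] False show False by simp
      qed
      then show ?thesis using card_split[OF fin, of "Suc m"] cL bound_small[of d m] False dm by simp
    qed
  qed
qed



theorem theorem2:
  fixes n d r :: nat and A :: "nat set set"
  assumes "0 < d" and "d < n"
    and "r \<in> {0, 1}" and "d mod 2 = r"
    and "A \<subseteq> Pow {1..n}"
    and "VC n (symdiff_family A) \<le> d"
  shows "card A \<le> 2 ^ r * binom_le (n - r) (d div 2)"
proof -
  have Asub: "A \<subseteq> Pow {1..n}" by fact
  define D where "D = dcomp n A"
  have Dsub: "D \<subseteq> Pow {1..n}" unfolding D_def using comp_sub[OF Asub] .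
  have Ddown: "down D" unfolding D_def using comp_down[OF Asub] .
  have Dcard: "card D = card A" unfolding D_def using comp_card[OF Asub] .
  have sdfA: "symdiff_family A = sdf A A" unfolding sdf_def symdiff_family_def by simp
  have VCge: "card Y \<le> VC n (symdiff_family A)" if "Y \<subseteq> {1..n}" "shatters (symdiff_family A) Y" for Y
  proof -
    have "{card Y |Y. Y \<subseteq> {1..n} \<and> shatters (symdiff_family A) Y} \<subseteq> card ` Pow {1..n}" by auto
    then have "finite ({card Y |Y. Y \<subseteq> {1..n} \<and> shatters (symdiff_family A) Y} \<union> {0})"
      by (meson finite_Pow_iff finite_atLeastAtMost finite_imageI finite_insert finite_subset finite_Un finite.emptyI)
    moreover have "card Y \<in> {card Y |Y. Y \<subseteq> {1..n} \<and> shatters (symdiff_family A) Y} \<union> {0}"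
      using that by blast
    ultimately show ?thesis unfolding VC_def by (rule Max_ge)
  qed
  have Dun: "unionb d D" unfolding unionb_def
  proof (intro ballI)
    fix U V assume U: "U \<in> D" and V: "V \<in> D"
    have V': "V - U \<in> D" using Ddown V unfolding down_def by blast
    have "shatters (sdf A A) (U \<union> (V - U))"
      using comp_shatter[OF Asub Asub, of U "V - U"] U V' unfolding D_def by blast
    then have "shatters (symdiff_family A) (U \<union> V)" using sdfA by simp
    moreover have "U \<union> V \<subseteq> {1..n}" using U V Dsub by blast
    ultimately have "card (U \<union> V) \<le> VC n (symdiff_family A)" using VCge by blast
    then show "card (U \<union> V) \<le> d" using assms(6) by simp
  qed
  define P where "P = (\<lambda>E. E \<subseteq> Pow {1..n} \<and> down E \<and> card E = card A \<and> unionb d E)"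
  have "P D" unfolding P_def using Dsub Ddown Dcard Dun by simp
  then obtain E where PE: "P E" and Emin: "\<And>E'. P E' \<Longrightarrow> wt E \<le> wt E'"
    using ex_has_least_nat[of P D wt] by blast
  have Esub: "E \<subseteq> Pow {1..n}" and Edown: "down E" and Ecard: "card E = card A" and Eun: "unionb d E"
    using PE unfolding P_def by auto
  have finE: "finite E" using Esub by (rule finite_subset) simp
  have finS: "\<And>S. S \<in> E \<Longrightarrow> finite S" using Esub by (meson PowD finite_atLeastAtMost finite_subset subsetD)
  have Eshift: "shifted E" unfolding shifted_def
  proof (intro ballI allI impI)
    fix S i j assume S: "S \<in> E" and ij: "1 \<le> i \<and> i < j \<and> j \<in> S \<and> i \<notin> S"
    show "sw i j S \<in> E"
    proof (rule ccontr)
      assume nE: "sw i j S \<notin> E"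
      let ?E' = "phi i j E ` E"
      have "?E' \<subseteq> Pow {1..n}" using phi_sub[OF Esub] ij by blast
      moreover have "down ?E'" using phi_down[OF Edown] .
      moreover have "card ?E' = card A" using card_image[OF phi_inj[of i j E]] ij Ecard by simp
      moreover have "unionb d ?E'" using phi_unionb[OF finS Eun] by blast
      ultimately have "P ?E'" unfolding P_def by simp
      then have "wt E \<le> wt ?E'" by (rule Emin)
      moreover have "wt ?E' < wt E" using phi_wt[OF finE finS _ S _ _ nE] ij by blast
      ultimately show False by simp
    qed
  qed
  have "card E \<le> bound n d" using kleitman[OF assms(2) Esub Edown Eshift Eun] .
  then show ?thesis using Ecard assms(4) unfolding bound_def by simp
qed

end
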